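(* Let $P\in\mathrm{Sym}(n,\mathbb{R})$ be invertible and $Q\in\mathrm{Mat}(n,\mathbb{R})$. For $\lambda\in\mathbb{R}$ let $B_\lambda=\begin{bmatrix}P^{-1}&-P^{-1}Q\\-Q^TP^{-1}&Q^TP^{-1}Q-\lambda P\end{bmatrix}$ and $J=\begin{bmatrix}0&-I_n\\ I_n&0\end{bmatrix}$. Then there exists $\widehat\lambda>0$ such that $JB_\lambda$ is hyperbolic for every $\lambda>\widehat\lambda$.
   Context: A real matrix is hyperbolic if it has no eigenvalue on the imaginary axis. *)

theory Defs
  imports "Jordan_Normal_Form.Char_Poly"
begin

definition hyperbolic :: "real mat \<Rightarrow> bool" where
  "hyperbolic A \<longleftrightarrow> (\<forall>c::complex. Re c = 0 \<longrightarrow> \<not> eigenvalue (map_mat complex_of_real A) c)"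

definition Bmat :: "real mat \<Rightarrow> real mat \<Rightarrow> real mat \<Rightarrow> real \<Rightarrow> real mat" where
  "Bmat P Pinv Q lam = four_block_mat
     Pinv (- (Pinv * Q))
     (- (transpose_mat Q * Pinv)) (transpose_mat Q * Pinv * Q - lam \<cdot>\<^sub>m P)"

definition Jmat :: "nat \<Rightarrow> real mat" where
  "Jmat n = four_block_mat (0\<^sub>m n n) (- 1\<^sub>m n) (1\<^sub>m n) (0\<^sub>m n n)"

end

theory Submission imports Defs begin

abbreviation cm :: "real mat \<Rightarrow> complex mat" where "cm \<equiv> map_mat complex_of_real"

lemma cm_add: "A \<in> carrier_mat n m \<Longrightarrow> B \<in> carrier_mat n m \<Longrightarrow> cm (A + B) = cm A + cm B"
  by (rule eq_matI) auto
lemma cm_minus: "A \<in> carrier_mat n m \<Longrightarrow> B \<in> carrier_mat n m \<Longrightarrow> cm (A - B) = cm A - cm B"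
  by (rule eq_matI) auto
lemma cm_uminus: "cm (- A) = - cm A"
  by (rule eq_matI) auto
lemma cm_smult: "cm (r \<cdot>\<^sub>m A) = complex_of_real r \<cdot>\<^sub>m cm A"
  by (rule eq_matI) auto
lemma cm_mult: "A \<in> carrier_mat n k \<Longrightarrow> B \<in> carrier_mat k m \<Longrightarrow> cm (A * B) = cm A * cm B"
  by (rule of_real_hom.mat_hom_mult)
lemma cm_one: "cm (1\<^sub>m n) = 1\<^sub>m n" by (rule eq_matI) auto
lemma cm_zero: "cm (0\<^sub>m n m) = 0\<^sub>m n m" by (rule eq_matI) auto

lemma smult_mat_mult_vec: "v \<in> carrier_vec (dim_col A) \<Longrightarrow> (k \<cdot>\<^sub>m A) *\<^sub>v v = k \<cdot>\<^sub>v (A *\<^sub>v (v :: 'a :: comm_ring vec))"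
  by (rule eq_vecI) (auto simp: scalar_prod_def sum_distrib_left ac_simps)

lemma key:
  fixes n :: nat and P Pinv Q :: "real mat" and lam :: real and c :: complex and v :: "complex vec"
  assumes P: "P \<in> carrier_mat n n" 
    and Pi: "Pinv \<in> carrier_mat n n" and PPi: "P * Pinv = 1\<^sub>m n" and PiP: "Pinv * P = 1\<^sub>m n"
    and Q: "Q \<in> carrier_mat n n"
    and v: "v \<in> carrier_vec (n+n)" and v0: "v \<noteq> 0\<^sub>v (n+n)" and Mv: "cm (Jmat n * Bmat P Pinv Q lam) *\<^sub>v v = c \<cdot>\<^sub>v v"
  shows "\<exists>b. b \<in> carrier_vec n \<and> b \<noteq> 0\<^sub>v n \<and> (complex_of_real lam - c^2) \<cdot>\<^sub>v b = c \<cdot>\<^sub>v (cm (Pinv * (Q - transpose_mat Q)) *\<^sub>v b)"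
proof -
  define p where "p = cm P"
  define pi where "pi = cm Pinv"
  define q where "q = cm Q"
  define qt where "qt = transpose_mat q"
  have p: "p \<in> carrier_mat n n" and pi: "pi \<in> carrier_mat n n" and q: "q \<in> carrier_mat n n"
    and qt: "qt \<in> carrier_mat n n"
    using P Pi Q by (auto simp: p_def pi_def q_def qt_def)
  have ppi: "p * pi = 1\<^sub>m n" using PPi P Pi unfolding p_def pi_def by (metis cm_mult cm_one)
  have pip: "pi * p = 1\<^sub>m n" using PiP P Pi unfolding p_def pi_def by (metis cm_mult cm_one)
  have cJ: "cm (Jmat n) = four_block_mat (0\<^sub>m n n) (- 1\<^sub>m n) (1\<^sub>m n) (0\<^sub>m n n)"
    unfolding Jmat_def by (subst map_four_block_mat) (auto simp: cm_uminus cm_one cm_zero)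
  have cB: "cm (Bmat P Pinv Q lam) = four_block_mat pi (- (pi * q)) (- (qt * pi)) (qt * pi * q - complex_of_real lam \<cdot>\<^sub>m p)"
    unfolding Bmat_def using P Pi Q
    by (subst map_four_block_mat) (auto simp: cm_uminus cm_smult p_def pi_def q_def qt_def cm_mult[where n=n and k=n and m=n] 
       cm_minus[where n=n and m=n] map_mat_transpose)
  have J: "Jmat n \<in> carrier_mat (n+n) (n+n)" unfolding Jmat_def by auto
  have B: "Bmat P Pinv Q lam \<in> carrier_mat (n+n) (n+n)" unfolding Bmat_def using P Pi Q by auto
  define a where "a = vec_first v n"
  define b where "b = vec_last v n"
  have a: "a \<in> carrier_vec n" and b: "b \<in> carrier_vec n" unfolding a_def b_def by auto
  have vab: "v = a @\<^sub>v b" unfolding a_def b_def using v by auto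
  have "cm (Jmat n * Bmat P Pinv Q lam) *\<^sub>v v = cm (Jmat n) *\<^sub>v (cm (Bmat P Pinv Q lam) *\<^sub>v v)"
    using J B v by (simp add: cm_mult[OF J B] assoc_mult_mat_vec[where ?n\<^sub>1="n+n"])
  also have "cm (Bmat P Pinv Q lam) *\<^sub>v v = (pi *\<^sub>v a + (- (pi * q)) *\<^sub>v b) @\<^sub>v ((- (qt * pi)) *\<^sub>v a + (qt * pi * q - complex_of_real lam \<cdot>\<^sub>m p) *\<^sub>v b)"
    unfolding cB vab using p pi q qt a b by (subst four_block_mat_mult_vec) auto
  finally have Mv2: "cm (Jmat n) *\<^sub>v ((pi *\<^sub>v a + (- (pi * q)) *\<^sub>v b) @\<^sub>v ((- (qt * pi)) *\<^sub>v a + (qt * pi * q - complex_of_real lam \<cdot>\<^sub>m p) *\<^sub>v b)) = c \<cdot>\<^sub>v (a @\<^sub>v b)"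
    using Mv vab by simp
  define x where "x = pi *\<^sub>v a + (- (pi * q)) *\<^sub>v b"
  define y where "y = (- (qt * pi)) *\<^sub>v a + (qt * pi * q - complex_of_real lam \<cdot>\<^sub>m p) *\<^sub>v b"
  have x: "x \<in> carrier_vec n" unfolding x_def using pi q a b by (auto intro!: carrier_vecI)
  have y: "y \<in> carrier_vec n" unfolding y_def using pi q qt p a b by (auto intro!: carrier_vecI)
  have "cm (Jmat n) *\<^sub>v (x @\<^sub>v y) = (- y) @\<^sub>v x"
    unfolding cJ using x y by (subst four_block_mat_mult_vec[of _ n n _ n _ n]) auto
  moreover have "c \<cdot>\<^sub>v (a @\<^sub>v b) = (c \<cdot>\<^sub>v a) @\<^sub>v (c \<cdot>\<^sub>v b)"
    by (rule eq_vecI) (auto simp: append_vec_def Let_def)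
  ultimately have "(- y) @\<^sub>v x = (c \<cdot>\<^sub>v a) @\<^sub>v (c \<cdot>\<^sub>v b)" using Mv2 unfolding x_def y_def by simp
  then have E1: "x = c \<cdot>\<^sub>v b" and E2: "- y = c \<cdot>\<^sub>v a"
    using x y a b by (subst (asm) append_vec_eq; auto)+
  define PIa where "PIa = pi *\<^sub>v a"
  define QB where "QB = q *\<^sub>v b"
  define PIQB where "PIQB = pi *\<^sub>v QB"
  define QTB where "QTB = qt *\<^sub>v b"
  define PB where "PB = p *\<^sub>v b"
  have PIa: "PIa \<in> carrier_vec n" and QB: "QB \<in> carrier_vec n" and PIQB: "PIQB \<in> carrier_vec n"
    and QTB: "QTB \<in> carrier_vec n" and PB: "PB \<in> carrier_vec n"
    unfolding PIa_def QB_def PIQB_def QTB_def PB_def using p pi q qt a b by auto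
  have H1: "x = PIa - PIQB"
    unfolding x_def PIa_def PIQB_def QB_def using pi q a b
    by (simp add: minus_add_uminus_vec[of _ n])
  have h1: "(qt*pi*q) *\<^sub>v b = qt *\<^sub>v PIQB"
    unfolding PIQB_def QB_def using qt pi q b by (metis assoc_mult_mat_vec mult_carrier_mat mult_mat_vec_carrier)
  have h2: "(- (qt*pi)) *\<^sub>v a = - (qt *\<^sub>v PIa)"
    unfolding PIa_def using qt pi a by simp
  have h3: "(complex_of_real lam \<cdot>\<^sub>m p) *\<^sub>v b = complex_of_real lam \<cdot>\<^sub>v PB"
    unfolding PB_def using p b by (simp add: smult_mat_mult_vec)
  have h4: "(qt*pi*q - complex_of_real lam \<cdot>\<^sub>m p) *\<^sub>v b = (qt*pi*q) *\<^sub>v b - (complex_of_real lam \<cdot>\<^sub>m p) *\<^sub>v b"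
    using qt pi q p b by (intro minus_mult_distrib_mat_vec[of _ n n]) auto
  have H2: "y = - (qt *\<^sub>v PIa) + (qt *\<^sub>v PIQB - complex_of_real lam \<cdot>\<^sub>v PB)"
    unfolding y_def h4 h1 h2 h3 ..
  have e1: "\<forall>i<n. PIa$i - PIQB$i = c * b$i" using E1[unfolded H1] PIa PIQB b by (auto simp: vec_eq_iff)
  have E1': "PIa = PIQB + c \<cdot>\<^sub>v b"
    using e1 PIa PIQB b by (auto simp: vec_eq_iff algebra_simps)
  have f1: "qt *\<^sub>v PIa = qt *\<^sub>v PIQB + c \<cdot>\<^sub>v QTB"
    unfolding E1' QTB_def using qt PIQB b by (simp add: mult_add_distrib_mat_vec[of _ n n] mult_mat_vec[of _ n n])
  have f2: "p *\<^sub>v PIa = p *\<^sub>v PIQB + c \<cdot>\<^sub>v PB"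
    unfolding E1' PB_def using p PIQB b by (simp add: mult_add_distrib_mat_vec[of _ n n] mult_mat_vec[of _ n n])
  have f3: "p *\<^sub>v PIa = a" unfolding PIa_def using p pi a ppi
    by (metis assoc_mult_mat_vec one_mult_mat_vec)
  have f4: "p *\<^sub>v PIQB = QB" unfolding PIQB_def using p pi QB ppi
    by (metis assoc_mult_mat_vec one_mult_mat_vec)
  define U where "U = qt *\<^sub>v PIa"
  define W where "W = qt *\<^sub>v PIQB"
  have U: "U \<in> carrier_vec n" and W: "W \<in> carrier_vec n" unfolding U_def W_def using qt PIa PIQB by auto
  have e2: "\<forall>i<n. U$i - (W$i - lam * PB$i) = c * a$i"
    using E2[unfolded H2, folded U_def W_def] U W PB a by (auto simp: vec_eq_iff)
  have e3: "\<forall>i<n. U$i = W$i + c * QTB$i"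
    using f1[folded U_def W_def] QTB W by (auto simp: vec_eq_iff)
  have e4: "\<forall>i<n. a$i = QB$i + c * PB$i"
    using f2[unfolded f3 f4] QB PB by (auto simp: vec_eq_iff)
  have e5: "\<forall>i<n. (lam - c^2) * PB$i = c * (QB$i - QTB$i)"
  proof (intro allI impI)
    fix i assume i: "i < n"
    from e2[rule_format, OF i] e3[rule_format, OF i] e4[rule_format, OF i]
    show "(lam - c^2) * PB$i = c * (QB$i - QTB$i)" by (simp add: algebra_simps power2_eq_square)
  qed
  have F5: "(lam - c^2) \<cdot>\<^sub>v PB = c \<cdot>\<^sub>v (QB - QTB)" using e5 PB QB QTB by (auto simp: vec_eq_iff)
  have "pi *\<^sub>v ((lam - c^2) \<cdot>\<^sub>v PB) = (lam - c^2) \<cdot>\<^sub>v b"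
  proof -
    have "pi *\<^sub>v (p *\<^sub>v b) = b" using pi p b pip by (metis assoc_mult_mat_vec one_mult_mat_vec)
    then show ?thesis unfolding PB_def using pi p b by (simp add: mult_mat_vec[of _ n n])
  qed
  moreover have "pi *\<^sub>v (c \<cdot>\<^sub>v (QB - QTB)) = c \<cdot>\<^sub>v ((pi * (q - qt)) *\<^sub>v b)"
  proof -
    have "(pi * (q - qt)) *\<^sub>v b = pi *\<^sub>v ((q - qt) *\<^sub>v b)" by (rule assoc_mult_mat_vec[OF pi minus_carrier_mat[OF qt] b])
    also have "(q - qt) *\<^sub>v b = QB - QTB" unfolding QB_def QTB_def using q qt b
      by (rule minus_mult_distrib_mat_vec)
    finally show ?thesis using pi QB QTB mult_mat_vec[OF pi minus_carrier_vec[OF QB QTB], of c] by simp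
  qed
  ultimately have F: "(lam - c^2) \<cdot>\<^sub>v b = c \<cdot>\<^sub>v ((pi * (q - qt)) *\<^sub>v b)" using F5 by simp
  have b0: "b \<noteq> 0\<^sub>v n"
  proof
    assume bz: "b = 0\<^sub>v n"
    have "QB = 0\<^sub>v n" "PB = 0\<^sub>v n" unfolding QB_def PB_def bz using q p by auto
    then have "a = 0\<^sub>v n" using e4 a by (auto simp: vec_eq_iff)
    then have "v = 0\<^sub>v (n+n)" using vab bz by (auto simp: vec_eq_iff append_vec_def Let_def)
    then show False using v0 by simp
  qed
  have "cm (Pinv * (Q - transpose_mat Q)) = pi * (q - qt)"
  proof -
    have Qt: "transpose_mat Q \<in> carrier_mat n n" using Q by auto
    have "cm (Pinv * (Q - transpose_mat Q)) = cm Pinv * cm (Q - transpose_mat Q)"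
      by (rule cm_mult[OF Pi minus_carrier_mat[OF Qt]])
    also have "cm (Q - transpose_mat Q) = cm Q - cm (transpose_mat Q)" by (rule cm_minus[OF Q Qt])
    also have "cm (transpose_mat Q) = transpose_mat (cm Q)" by (simp add: map_mat_transpose)
    finally show ?thesis unfolding pi_def q_def qt_def .
  qed
  then show ?thesis using F b b0 by auto
qed

lemma bound:
  fixes R :: "complex mat" and b :: "complex vec" and c :: complex and lam S :: real
  assumes R: "R \<in> carrier_mat n n" and b: "b \<in> carrier_vec n" and b0: "b \<noteq> 0\<^sub>v n"
    and S: "S = (\<Sum>i<n. \<Sum>j<n. cmod (R $$ (i,j)))"
    and F: "(complex_of_real lam - c^2) \<cdot>\<^sub>v b = c \<cdot>\<^sub>v (R *\<^sub>v b)"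
    and c: "Re c = 0" and lam: "lam > S^2 + 1"
  shows False
proof -
  have "n > 0" using b b0 by (cases n) auto
  define m where "m = Max ((\<lambda>j. cmod (b$j)) ` {..<n})"
  have "m \<in> (\<lambda>j. cmod (b$j)) ` {..<n}" unfolding m_def using \<open>n > 0\<close> by (intro Max_in) auto
  then obtain k where k: "k < n" and mk: "m = cmod (b$k)" by auto
  have mx: "cmod (b$j) \<le> cmod (b$k)" if "j < n" for j
    unfolding mk[symmetric] m_def using that by (intro Max_ge) auto
  have bk: "cmod (b$k) > 0"
  proof (rule ccontr)
    assume "\<not> cmod (b$k) > 0"
    then have "\<forall>j<n. b$j = 0" using mx by (meson norm_le_zero_iff order_trans not_le norm_ge_zero)
    then have "b = 0\<^sub>v n" using b by (auto simp: vec_eq_iff)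
    then show False using b0 by simp
  qed
  define y where "y = Im c"
  have cy: "c = \<i> * complex_of_real y" using c unfolding y_def by (simp add: complex_eq_iff)
  have lc: "complex_of_real lam - c^2 = complex_of_real (lam + y^2)" unfolding cy
    by (simp add: power2_eq_square algebra_simps)
  have comp: "complex_of_real (lam + y^2) * b$k = c * (\<Sum>j<n. R $$ (k,j) * b$j)"
  proof -
    have "((complex_of_real lam - c^2) \<cdot>\<^sub>v b) $ k = (c \<cdot>\<^sub>v (R *\<^sub>v b)) $ k" using F by simp
    then show ?thesis using k R b unfolding lc
      by (simp add: scalar_prod_def lessThan_atLeast0)
  qed
  have S0: "0 \<le> S" unfolding S by (intro sum_nonneg) auto
  have rowS: "(\<Sum>j<n. cmod (R $$ (k,j))) \<le> S"
    unfolding S using k by (intro member_le_sum[of k "{..<n}" "\<lambda>i. \<Sum>j<n. cmod (R $$ (i,j))"]) (auto intro: sum_nonneg)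
  have "lam + y^2 \<ge> 0" using lam by (smt (verit) zero_le_power2)
  then have nl: "cmod (complex_of_real (lam + y^2)) = lam + y^2" by (metis abs_of_nonneg norm_of_real)
  have "(lam + y^2) * cmod (b$k) = cmod (complex_of_real (lam + y^2) * b$k)"
    by (simp only: norm_mult nl)
  also have "\<dots> = \<bar>y\<bar> * cmod (\<Sum>j<n. R $$ (k,j) * b$j)" unfolding comp cy by (simp add: norm_mult)
  also have "\<dots> \<le> \<bar>y\<bar> * (\<Sum>j<n. cmod (R $$ (k,j)) * cmod (b$k))"
  proof (intro mult_left_mono)
    have "cmod (\<Sum>j<n. R $$ (k,j) * b$j) \<le> (\<Sum>j<n. cmod (R $$ (k,j) * b$j))" by (rule norm_sum)
    also have "\<dots> \<le> (\<Sum>j<n. cmod (R $$ (k,j)) * cmod (b$k))"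
      by (intro sum_mono) (auto simp: norm_mult intro: mult_left_mono mx)
    finally show "cmod (\<Sum>j<n. R $$ (k,j) * b$j) \<le> (\<Sum>j<n. cmod (R $$ (k,j)) * cmod (b$k))" .
  qed auto
  also have "\<dots> = (\<bar>y\<bar> * (\<Sum>j<n. cmod (R $$ (k,j)))) * cmod (b$k)" by (simp add: sum_distrib_right)
  also have "\<dots> \<le> (\<bar>y\<bar> * S) * cmod (b$k)"
    using rowS bk by (intro mult_right_mono mult_left_mono) auto
  finally have "(lam + y^2) * cmod (b$k) \<le> (\<bar>y\<bar> * S) * cmod (b$k)" .
  then have le: "lam + y^2 \<le> \<bar>y\<bar> * S" using mult_le_cancel_right_pos[OF bk] by blast
  have "0 \<le> (\<bar>y\<bar> - S)^2" by (rule zero_le_power2)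
  moreover have "(\<bar>y\<bar> - S)^2 = y^2 - 2 * (\<bar>y\<bar> * S) + S^2" by (simp only: power2_diff power2_abs mult.assoc)
  moreover have "0 \<le> \<bar>y\<bar> * S" using S0 by simp
  ultimately have "\<bar>y\<bar> * S \<le> y^2 + S^2" by linarith
  then show False using le lam by linarith
qed

theorem corollary2p5:
  fixes n :: nat and P Pinv Q :: "real mat"
  assumes "P \<in> carrier_mat n n" and "transpose_mat P = P"
    and "Pinv \<in> carrier_mat n n" and "P * Pinv = 1\<^sub>m n" and "Pinv * P = 1\<^sub>m n"
    and "Q \<in> carrier_mat n n"
  shows "\<exists>lam0 > 0. \<forall>lam > lam0. hyperbolic (Jmat n * Bmat P Pinv Q lam)"
proof -
  define R where "R = cm (Pinv * (Q - transpose_mat Q))"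
  have R: "R \<in> carrier_mat n n" unfolding R_def using assms by auto
  define S where "S = (\<Sum>i<n. \<Sum>j<n. cmod (R $$ (i,j)))"
  have "\<forall>lam > S^2 + 1. hyperbolic (Jmat n * Bmat P Pinv Q lam)"
  proof (intro allI impI)
    fix lam :: real assume lam: "lam > S^2 + 1"
    have J: "Jmat n \<in> carrier_mat (n+n) (n+n)" unfolding Jmat_def by auto
    show "hyperbolic (Jmat n * Bmat P Pinv Q lam)"
      unfolding hyperbolic_def
    proof (intro allI impI notI)
      fix c :: complex assume c: "Re c = 0" and ev: "eigenvalue (cm (Jmat n * Bmat P Pinv Q lam)) c"
      then obtain v where v: "v \<in> carrier_vec (n+n)" "v \<noteq> 0\<^sub>v (n+n)"
        "cm (Jmat n * Bmat P Pinv Q lam) *\<^sub>v v = c \<cdot>\<^sub>v v"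
        unfolding eigenvalue_def eigenvector_def using J by auto
      from key[OF assms(1) assms(3-6) v] obtain b where
        "b \<in> carrier_vec n" "b \<noteq> 0\<^sub>v n" "(complex_of_real lam - c^2) \<cdot>\<^sub>v b = c \<cdot>\<^sub>v (R *\<^sub>v b)"
        unfolding R_def by blast
      from bound[OF R this(1,2) S_def this(3) c lam] show False .
    qed
  qed
  moreover have "S^2 + 1 > 0" using zero_le_power2[of S] by linarith
  ultimately show ?thesis by blast
qed

end
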